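(* Let $M$ be a connected matroid on $E$, and let $\mathfrak{S}\subseteq\mathcal{P}(E)$ be a collection such that (i) $\mathfrak{S}$ contains every set $S\subseteq E$ for which both $M|_S$ and $M/S$ are connected, and (ii) whenever $S\in\mathfrak{S}$, every connected component of $M|_S$ is also in $\mathfrak{S}$. Then $\mathrm{ec}_{\mathfrak{S}}(M)=\mathrm{ec}(M)$.
   Context: $M$ has rank $k$. A matroid is connected if it is not a direct sum of two matroids on nonempty sets; its connected components are the ground sets of the connected summands in its decomposition into connected matroids. $M|_S$ is the restriction and $M/S$ the contraction (on $E-S$, with $\mathrm{rk}_{M/S}(A)=\mathrm{rk}(A\cup S)-\mathrm{rk}(S)$). For $\mathfrak{S}\subseteq\mathcal{P}(E)$ and $S\in\mathfrak{S}$, $c(S)=\#S-\mathrm{rk}\,S$, $a_{\mathfrak{S}}(S)=c(S)-\sum_{T\in\mathfrak{S},\,T\subsetneq S}a_{\mathfrak{S}}(T)$ (recursively, $a_{\mathfrak{S}}(\varnothing)=0$), $\mathrm{ec}_{\mathfrak{S}}(M)=\sum_{S\in\mathfrak{S}}(k-\mathrm{rk}\,S)a_{\mathfrak{S}}(S)$, and $\mathrm{ec}(M)=\mathrm{ec}_{\mathcal{P}(E)}(M)$. *)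

theory Defs
  imports Main
begin

text \<open>A matroid on a finite ground set E, given by its rank function rk
  (only its values on subsets of E matter); standard rank axioms.\<close>
definition matroid :: "'a set \<Rightarrow> ('a set \<Rightarrow> nat) \<Rightarrow> bool" where
  "matroid E rk \<longleftrightarrow> finite E
     \<and> (\<forall>A. A \<subseteq> E \<longrightarrow> rk A \<le> card A)
     \<and> (\<forall>A B. A \<subseteq> B \<and> B \<subseteq> E \<longrightarrow> rk A \<le> rk B)
     \<and> (\<forall>A B. A \<subseteq> E \<and> B \<subseteq> E \<longrightarrow> rk (A \<union> B) + rk (A \<inter> B) \<le> rk A + rk B)"

text \<open>Restriction M|S has ground set S and rank rk; contraction M/S has ground set E - S.\<close>
definition contr_rk :: "('a set \<Rightarrow> nat) \<Rightarrow> 'a set \<Rightarrow> 'a set \<Rightarrow> nat" where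
  "contr_rk rk S A = rk (A \<union> S) - rk S"

definition direct_sum_decomp :: "'a set \<Rightarrow> ('a set \<Rightarrow> nat) \<Rightarrow> 'a set set \<Rightarrow> bool" where
  "direct_sum_decomp E rk P \<longleftrightarrow> (\<Union>P = E) \<and> (\<forall>B\<in>P. B \<noteq> {})
     \<and> (\<forall>B\<in>P. \<forall>B'\<in>P. B \<noteq> B' \<longrightarrow> B \<inter> B' = {})
     \<and> (\<forall>X. X \<subseteq> E \<longrightarrow> rk X = (\<Sum>B\<in>P. rk (X \<inter> B)))"

definition connected_matroid :: "'a set \<Rightarrow> ('a set \<Rightarrow> nat) \<Rightarrow> bool" where
  "connected_matroid E rk \<longleftrightarrow>
     \<not> (\<exists>A B. A \<noteq> {} \<and> B \<noteq> {} \<and> A \<inter> B = {} \<and> A \<union> B = E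
             \<and> (\<forall>X. X \<subseteq> E \<longrightarrow> rk X = rk (X \<inter> A) + rk (X \<inter> B)))"

definition component :: "'a set \<Rightarrow> ('a set \<Rightarrow> nat) \<Rightarrow> 'a set \<Rightarrow> bool" where
  "component E rk C \<longleftrightarrow> (\<exists>P. direct_sum_decomp E rk P
       \<and> (\<forall>B\<in>P. connected_matroid B rk) \<and> C \<in> P)"

function a_coef :: "'a set set \<Rightarrow> ('a set \<Rightarrow> nat) \<Rightarrow> 'a set \<Rightarrow> int" where
  "a_coef SS rk S =
     (if S = {} \<or> infinite S then 0
      else (int (card S) - int (rk S)) - (\<Sum>T\<in>{T\<in>SS. T \<subset> S}. a_coef SS rk T))"
  by auto
termination
  by (relation "measure (\<lambda>(SS, rk, S). card S)") (auto intro: psubset_card_mono)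

definition ec_on :: "'a set \<Rightarrow> ('a set \<Rightarrow> nat) \<Rightarrow> 'a set set \<Rightarrow> int" where
  "ec_on E rk SS = (\<Sum>S\<in>SS. (int (rk E) - int (rk S)) * a_coef SS rk S)"

definition ec :: "'a set \<Rightarrow> ('a set \<Rightarrow> nat) \<Rightarrow> int" where
  "ec E rk = ec_on E rk (Pow E)"

end

theory Submission
  imports Defs
begin


declare a_coef.simps[simp del]

function up :: "'a set \<Rightarrow> ('a set \<Rightarrow> nat) \<Rightarrow> 'a set set \<Rightarrow> 'a set \<Rightarrow> int" where
  "up E rk F S = (if infinite E \<or> \<not> S \<subseteq> E then 0
     else (int (rk E) - int (rk S)) - (\<Sum>T\<in>{T\<in>F. S \<subset> T \<and> T \<subseteq> E}. up E rk F T))"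
  by auto
termination
proof (relation "measure (\<lambda>(E, rk, F, S). card (E - S))", goal_cases)
  case 1 then show ?case by auto
next
  case (2 E rk F S T)
  then have "E - T \<subset> E - S" by blast
  then show ?case using 2 by (auto intro: psubset_card_mono)
qed

declare up.simps[simp del]

lemma a_empty: "a_coef F rk {} = 0"
  by (subst a_coef.simps) simp

lemma a_eq: "finite S \<Longrightarrow> S \<noteq> {} \<Longrightarrow>
  a_coef F rk S = (int (card S) - int (rk S)) - (\<Sum>T\<in>{T\<in>F. T \<subset> S}. a_coef F rk T)"
  by (subst a_coef.simps) simp

lemma up_eq: "finite E \<Longrightarrow> S \<subseteq> E \<Longrightarrow>
  up E rk F S = (int (rk E) - int (rk S)) - (\<Sum>T\<in>{T\<in>F. S \<subset> T \<and> T \<subseteq> E}. up E rk F T)"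
  by (subst up.simps) simp

lemma matroid_empty: "matroid E rk \<Longrightarrow> rk {} = 0"
proof -
  assume "matroid E rk"
  then have "rk {} \<le> card ({}::'a set)" unfolding matroid_def by blast
  then show ?thesis by simp
qed

lemma matroid_mono: "matroid E rk \<Longrightarrow> A \<subseteq> B \<Longrightarrow> B \<subseteq> E \<Longrightarrow> rk A \<le> rk B"
  unfolding matroid_def by blast

lemma matroid_submod: "matroid E rk \<Longrightarrow> A \<subseteq> E \<Longrightarrow> B \<subseteq> E \<Longrightarrow> rk (A \<union> B) + rk (A \<inter> B) \<le> rk A + rk B"
  unfolding matroid_def by blast

lemma matroid_finite: "matroid E rk \<Longrightarrow> finite E"
  unfolding matroid_def by blast

lemma a_resid: "finite S \<Longrightarrow> rk {} = 0 \<Longrightarrow>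
  a_coef F rk S + (\<Sum>T\<in>{T\<in>F. T \<subset> S}. a_coef F rk T) = int (card S) - int (rk S)"
proof (cases "S = {}")
  case True
  assume "rk {} = 0"
  then show ?thesis using True by (simp add: a_empty)
next
  case False
  assume "finite S"
  then show ?thesis using False a_eq[of S F rk] by simp
qed

lemma a_sum_in: assumes "finite S" "rk {} = 0" "S \<in> F"
  shows "(\<Sum>T\<in>{T\<in>F. T \<subseteq> S}. a_coef F rk T) = int (card S) - int (rk S)"
proof -
  have fin: "finite {T\<in>F. T \<subset> S}" by (rule finite_subset[of _ "Pow S"]) (auto simp: assms(1))
  have "{T\<in>F. T \<subseteq> S} = insert S {T\<in>F. T \<subset> S}" using assms by auto
  then have "(\<Sum>T\<in>{T\<in>F. T \<subseteq> S}. a_coef F rk T) = a_coef F rk S + (\<Sum>T\<in>{T\<in>F. T \<subset> S}. a_coef F rk T)"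
    using fin sum.insert[OF fin, of S "a_coef F rk"] by auto
  then show ?thesis using a_resid[of S rk F] assms by simp
qed

lemma up_resid: "finite E \<Longrightarrow> S \<subseteq> E \<Longrightarrow>
  up E rk F S + (\<Sum>T\<in>{T\<in>F. S \<subset> T \<and> T \<subseteq> E}. up E rk F T) = int (rk E) - int (rk S)"
  using up_eq[of E S rk F] by simp

lemma up_sum_in: assumes "finite E" "F \<subseteq> Pow E" "S \<in> F"
  shows "(\<Sum>T\<in>{T\<in>F. S \<subseteq> T}. up E rk F T) = int (rk E) - int (rk S)"
proof -
  have SE: "S \<subseteq> E" using assms by auto
  have fin: "finite {T\<in>F. S \<subset> T \<and> T \<subseteq> E}" by (rule finite_subset[of _ "Pow E"]) (auto simp: assms(1))
  have "{T\<in>F. S \<subseteq> T} = insert S {T\<in>F. S \<subset> T \<and> T \<subseteq> E}" using assms by auto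
  then have "(\<Sum>T\<in>{T\<in>F. S \<subseteq> T}. up E rk F T) = up E rk F S + (\<Sum>T\<in>{T\<in>F. S \<subset> T \<and> T \<subseteq> E}. up E rk F T)"
    using fin sum.insert[OF fin, of S "up E rk F"] by auto
  then show ?thesis using up_resid[OF assms(1) SE] by simp
qed

lemma a_local: "(\<And>T. T \<subset> S \<Longrightarrow> (T \<in> F \<longleftrightarrow> T \<in> G)) \<Longrightarrow> a_coef F rk S = a_coef G rk S"
proof (cases "finite S")
  case False
  then show ?thesis by (simp add: a_coef.simps[of F rk S] a_coef.simps[of G rk S])
next
  case True
  then show "(\<And>T. T \<subset> S \<Longrightarrow> (T \<in> F \<longleftrightarrow> T \<in> G)) \<Longrightarrow> a_coef F rk S = a_coef G rk S"
  proof (induction S rule: finite_psubset_induct)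
    case (psubset S)
    show ?case
    proof (cases "S = {}")
      case True then show ?thesis by (simp add: a_empty)
    next
      case False
      have e: "{T\<in>F. T \<subset> S} = {T\<in>G. T \<subset> S}" using psubset.prems by auto
      have "(\<Sum>T\<in>{T\<in>F. T \<subset> S}. a_coef F rk T) = (\<Sum>T\<in>{T\<in>G. T \<subset> S}. a_coef G rk T)"
        unfolding e
      proof (rule sum.cong[OF refl])
        fix T assume "T \<in> {T\<in>G. T \<subset> S}"
        then have "T \<subset> S" by auto
        then show "a_coef F rk T = a_coef G rk T"
          using psubset.IH[of T] psubset.prems psubset_trans[of _ T S] by blast
      qed
      then show ?thesis using a_eq[OF psubset.hyps False, of F rk] a_eq[OF psubset.hyps False, of G rk]
        by simp
    qed
  qed
qed

lemma up_local: assumes "finite E"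
  shows "(\<And>T. S \<subset> T \<Longrightarrow> T \<subseteq> E \<Longrightarrow> (T \<in> F \<longleftrightarrow> T \<in> G)) \<Longrightarrow> up E rk F S = up E rk G S"
proof (induction "card (E - S)" arbitrary: S rule: less_induct)
  case less
  show ?case
  proof (cases "S \<subseteq> E")
    case False then show ?thesis by (simp add: up.simps[of E rk F S] up.simps[of E rk G S])
  next
    case True
    have e: "{T\<in>F. S \<subset> T \<and> T \<subseteq> E} = {T\<in>G. S \<subset> T \<and> T \<subseteq> E}" using less.prems by auto
    have "(\<Sum>T\<in>{T\<in>F. S \<subset> T \<and> T \<subseteq> E}. up E rk F T) = (\<Sum>T\<in>{T\<in>G. S \<subset> T \<and> T \<subseteq> E}. up E rk G T)"
      unfolding e
    proof (rule sum.cong[OF refl])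
      fix T assume T: "T \<in> {T\<in>G. S \<subset> T \<and> T \<subseteq> E}"
      then have "E - T \<subset> E - S" by blast
      then have "card (E - T) < card (E - S)" using assms by (auto intro: psubset_card_mono)
      moreover have "\<And>U. T \<subset> U \<Longrightarrow> U \<subseteq> E \<Longrightarrow> (U \<in> F \<longleftrightarrow> U \<in> G)"
      proof -
        fix U assume "T \<subset> U" "U \<subseteq> E"
        moreover have "S \<subset> U" using T \<open>T \<subset> U\<close> by blast
        ultimately show "U \<in> F \<longleftrightarrow> U \<in> G" using less.prems by blast
      qed
      ultimately show "up E rk F T = up E rk G T"
        using less.hyps[of T] by blast
    qed
    then show ?thesis using up_eq[OF assms True, of rk F] up_eq[OF assms True, of rk G] by simp
  qed
qed



lemma mix: assumes "finite E" "F \<subseteq> G" "G \<subseteq> Pow E" "rk {} = 0"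
  shows "(\<Sum>S\<in>G. (\<Sum>T\<in>{T\<in>F. S \<subseteq> T}. up E rk F T) * a_coef G rk S)
       = (\<Sum>T\<in>F. up E rk F T * (int (card T) - int (rk T)))"
proof -
  have fG: "finite G" using assms by (meson finite_Pow_iff finite_subset)
  have fF: "finite F" using assms fG finite_subset by blast
  have "(\<Sum>S\<in>G. (\<Sum>T\<in>{T\<in>F. S \<subseteq> T}. up E rk F T) * a_coef G rk S)
      = (\<Sum>S\<in>G. (\<Sum>T\<in>{T\<in>F. S \<subseteq> T}. up E rk F T * a_coef G rk S))"
    by (simp add: sum_distrib_right)
  also have "\<dots> = (\<Sum>T\<in>F. (\<Sum>S\<in>{S\<in>G. S \<subseteq> T}. up E rk F T * a_coef G rk S))"
    using sum.swap_restrict[OF fG fF, of "\<lambda>S T. up E rk F T * a_coef G rk S" "\<lambda>S T. S \<subseteq> T"]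
    by simp
  also have "\<dots> = (\<Sum>T\<in>F. up E rk F T * (\<Sum>S\<in>{S\<in>G. S \<subseteq> T}. a_coef G rk S))"
    by (simp add: sum_distrib_left)
  also have "\<dots> = (\<Sum>T\<in>F. up E rk F T * (int (card T) - int (rk T)))"
  proof (rule sum.cong[OF refl])
    fix T assume T: "T \<in> F"
    then have "finite T" using assms by (meson PowD finite_subset subsetD)
    then show "up E rk F T * (\<Sum>S\<in>{S\<in>G. S \<subseteq> T}. a_coef G rk S) = up E rk F T * (int (card T) - int (rk T))"
      using a_sum_in[of T rk G] T assms by auto
  qed
  finally show ?thesis .
qed

lemma ec_dual: assumes "finite E" "F \<subseteq> Pow E" "rk {} = 0"
  shows "ec_on E rk F = (\<Sum>T\<in>F. up E rk F T * (int (card T) - int (rk T)))"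
proof -
  have "ec_on E rk F = (\<Sum>S\<in>F. (\<Sum>T\<in>{T\<in>F. S \<subseteq> T}. up E rk F T) * a_coef F rk S)"
    unfolding ec_on_def
    using up_sum_in[OF assms(1,2)] by (intro sum.cong) auto
  also have "\<dots> = (\<Sum>T\<in>F. up E rk F T * (int (card T) - int (rk T)))"
    using mix[of E F F rk] assms by simp
  finally show ?thesis .
qed

lemma change: assumes "finite E" "F \<subseteq> Pow E" "X \<subseteq> E" "X \<notin> F" "rk {} = 0"
  shows "ec_on E rk (insert X F) = ec_on E rk F + a_coef F rk X * up E rk F X"
proof -
  let ?G = "insert X F"
  let ?u = "up E rk F"
  have G: "?G \<subseteq> Pow E" using assms by auto
  have fG: "finite ?G" using assms G by (meson finite_Pow_iff finite_subset)
  have w: "int (rk E) - int (rk S) = (\<Sum>T\<in>{T\<in>F. S \<subseteq> T}. ?u T) + (if S = X then ?u X else 0)"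
    if "S \<in> ?G" for S
  proof (cases "S = X")
    case True
    have "{T\<in>F. X \<subseteq> T} = {T\<in>F. X \<subset> T \<and> T \<subseteq> E}" using assms by auto
    then show ?thesis using True up_resid[OF assms(1,3), of rk F] by simp
  next
    case False
    then show ?thesis using that up_sum_in[OF assms(1,2), of S rk] by simp
  qed
  have "ec_on E rk ?G = (\<Sum>S\<in>?G. ((\<Sum>T\<in>{T\<in>F. S \<subseteq> T}. ?u T) + (if S = X then ?u X else 0)) * a_coef ?G rk S)"
    unfolding ec_on_def using w by (intro sum.cong) auto
  also have "\<dots> = (\<Sum>S\<in>?G. (\<Sum>T\<in>{T\<in>F. S \<subseteq> T}. ?u T) * a_coef ?G rk S)
                 + (\<Sum>S\<in>?G. (if S = X then ?u X * a_coef ?G rk S else 0))"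
    by (subst sum.distrib[symmetric]) (rule sum.cong, auto simp: distrib_right)
  also have "(\<Sum>S\<in>?G. (if S = X then ?u X * a_coef ?G rk S else 0)) = ?u X * a_coef ?G rk X"
    using fG by (simp add: sum.delta)
  also have "a_coef ?G rk X = a_coef F rk X"
    by (rule a_local) auto
  also have "(\<Sum>S\<in>?G. (\<Sum>T\<in>{T\<in>F. S \<subseteq> T}. ?u T) * a_coef ?G rk S) = ec_on E rk F"
    using mix[of E F ?G rk] G assms ec_dual[of E F rk] by auto
  finally show ?thesis by simp
qed



lemma conn_empty: "connected_matroid {} r"
  unfolding connected_matroid_def by auto

lemma decomp_union: "direct_sum_decomp T r P \<Longrightarrow> \<Union>P = T"
  unfolding direct_sum_decomp_def by (rule conjunct1)

lemma decomp_ne: "direct_sum_decomp T r P \<Longrightarrow> \<forall>B\<in>P. B \<noteq> {}"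
  unfolding direct_sum_decomp_def by (drule conjunct2, rule conjunct1)

lemma decomp_disj0: "direct_sum_decomp T r P \<Longrightarrow> \<forall>B\<in>P. \<forall>B'\<in>P. B \<noteq> B' \<longrightarrow> B \<inter> B' = {}"
  unfolding direct_sum_decomp_def by (drule conjunct2, drule conjunct2, rule conjunct1)

lemma decomp_rank0: "direct_sum_decomp T r P \<Longrightarrow> \<forall>X. X \<subseteq> T \<longrightarrow> r X = (\<Sum>B\<in>P. r (X \<inter> B))"
  unfolding direct_sum_decomp_def by (drule conjunct2, drule conjunct2, rule conjunct2)

lemma decomp_rank: "direct_sum_decomp T r P \<Longrightarrow> X \<subseteq> T \<Longrightarrow> r X = (\<Sum>C\<in>P. r (X \<inter> C))"
  using decomp_rank0 by blast

lemma decomp_sub: "direct_sum_decomp T r P \<Longrightarrow> C \<in> P \<Longrightarrow> C \<subseteq> T \<and> C \<noteq> {}"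
  using decomp_union[of T r P] decomp_ne[of T r P] by blast

lemma decomp_disj: "direct_sum_decomp T r P \<Longrightarrow> C \<in> P \<Longrightarrow> C' \<in> P \<Longrightarrow> C \<noteq> C' \<Longrightarrow> C \<inter> C' = {}"
  using decomp_disj0[of T r P] by blast

lemma decomp_finite: "direct_sum_decomp T r P \<Longrightarrow> finite T \<Longrightarrow> finite P"
  using decomp_union[of T r P] by (metis finite_UnionD)

lemma decomp_exists:
  assumes "finite T" "T \<noteq> {}"
  shows "\<exists>P. direct_sum_decomp T r P \<and> (\<forall>B\<in>P. connected_matroid B r)"
  using assms
proof (induction T rule: finite_psubset_induct)
  case (psubset T)
  show ?case
  proof (cases "connected_matroid T r")
    case True
    have "direct_sum_decomp T r {T}"
      unfolding direct_sum_decomp_def using psubset.prems by (auto simp: Int_absorb2)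
    then show ?thesis using True by blast
  next
    case False
    then obtain A B where AB: "A \<noteq> {}" "B \<noteq> {}" "A \<inter> B = {}" "A \<union> B = T"
      and add: "\<And>X. X \<subseteq> T \<Longrightarrow> r X = r (X \<inter> A) + r (X \<inter> B)"
      unfolding connected_matroid_def by blast
    have "A \<subset> T" "B \<subset> T" using AB by auto
    then obtain PA PB where PA: "direct_sum_decomp A r PA" "\<forall>C\<in>PA. connected_matroid C r"
      and PB: "direct_sum_decomp B r PB" "\<forall>C\<in>PB. connected_matroid C r"
      using psubset.IH AB by meson
    have fA: "finite A" "finite B" using AB psubset.hyps by auto
    have fPA: "finite PA" using decomp_finite PA fA by blast
    have fPB: "finite PB" using decomp_finite PB fA by blast
    have sPA: "\<forall>C\<in>PA. C \<subseteq> A \<and> C \<noteq> {}" using decomp_sub[OF PA(1)] by blast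
    have sPB: "\<forall>C\<in>PB. C \<subseteq> B \<and> C \<noteq> {}" using decomp_sub[OF PB(1)] by blast
    have disj: "PA \<inter> PB = {}"
    proof (rule ccontr)
      assume "PA \<inter> PB \<noteq> {}"
      then obtain C where "C \<in> PA" "C \<in> PB" by blast
      then have "C \<subseteq> A \<inter> B" "C \<noteq> {}" using sPA sPB by auto
      then show False using AB(3) by blast
    qed
      have "\<Union>PA = A" "\<Union>PB = B" using decomp_union[OF PA(1)] decomp_union[OF PB(1)] by blast+
      then have u: "\<Union>(PA \<union> PB) = T" using AB by auto
      have ne: "\<forall>C\<in>PA \<union> PB. C \<noteq> {}" using sPA sPB by auto
      have dj: "\<forall>C\<in>PA \<union> PB. \<forall>C'\<in>PA \<union> PB. C \<noteq> C' \<longrightarrow> C \<inter> C' = {}"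
      proof (intro ballI)
        fix C C' assume "C \<in> PA \<union> PB" "C' \<in> PA \<union> PB"
        then show "C \<noteq> C' \<longrightarrow> C \<inter> C' = {}"
        proof (elim UnE)
          assume "C \<in> PA" "C' \<in> PA" then show ?thesis using decomp_disj[OF PA(1), of C C'] by simp
        next
          assume "C \<in> PB" "C' \<in> PB" then show ?thesis using decomp_disj[OF PB(1), of C C'] by simp
        next
          assume "C \<in> PA" "C' \<in> PB"
          then have "C \<subseteq> A" "C' \<subseteq> B" using sPA sPB by auto
          then show ?thesis using AB(3) by auto
        next
          assume "C \<in> PB" "C' \<in> PA"
          then have "C \<subseteq> B" "C' \<subseteq> A" using sPA sPB by auto
          then show ?thesis using AB(3) by auto
        qed
      qed
      have rr: "\<forall>X. X \<subseteq> T \<longrightarrow> r X = (\<Sum>C\<in>PA \<union> PB. r (X \<inter> C))"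
      proof (intro allI impI)
      fix X assume X: "X \<subseteq> T"
      have "r (X \<inter> A) = (\<Sum>C\<in>PA. r (X \<inter> A \<inter> C))" using decomp_rank[OF PA(1)] by blast
      also have "\<dots> = (\<Sum>C\<in>PA. r (X \<inter> C))"
        using sPA by (intro sum.cong) (auto intro: arg_cong[where f=r])
      finally have 1: "r (X \<inter> A) = (\<Sum>C\<in>PA. r (X \<inter> C))" .
      have "r (X \<inter> B) = (\<Sum>C\<in>PB. r (X \<inter> B \<inter> C))" using decomp_rank[OF PB(1)] by blast
      also have "\<dots> = (\<Sum>C\<in>PB. r (X \<inter> C))"
        using sPB by (intro sum.cong) (auto intro: arg_cong[where f=r])
      finally have 2: "r (X \<inter> B) = (\<Sum>C\<in>PB. r (X \<inter> C))" .
      show "r X = (\<Sum>C\<in>PA \<union> PB. r (X \<inter> C))"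
        using add[OF X] 1 2 sum.union_disjoint[OF fPA fPB disj, of "\<lambda>C. r (X \<inter> C)"] by simp
    qed
    have "direct_sum_decomp T r (PA \<union> PB)"
      unfolding direct_sum_decomp_def using u ne dj rr by (intro conjI)
    then show ?thesis using PA PB by blast
  qed
qed

lemma decomp_split:
  assumes "direct_sum_decomp T r P" "finite T" "r {} = 0" "D \<in> P" "Y \<subseteq> T"
  shows "r Y = r (Y \<inter> D) + r (Y - D)"
proof -
  have fP: "finite P" using decomp_finite assms by blast
  have sub: "D \<subseteq> T" using decomp_sub[OF assms(1,4)] by blast
  have dis: "\<And>C. C \<in> P \<Longrightarrow> C \<noteq> D \<Longrightarrow> C \<inter> D = {}" using decomp_disj[OF assms(1) _ assms(4)] by blast
  have "r (Y \<inter> D) = (\<Sum>C\<in>P. r (Y \<inter> D \<inter> C))" using decomp_rank[OF assms(1)] assms(5) by blast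
  also have "\<dots> = (\<Sum>C\<in>P. if C = D then r (Y \<inter> C) else 0)"
  proof (rule sum.cong[OF refl])
    fix C assume "C \<in> P"
    then show "r (Y \<inter> D \<inter> C) = (if C = D then r (Y \<inter> C) else 0)"
    proof (cases "C = D")
      case True then show ?thesis by (simp add: Int_assoc)
    next
      case False
      then have "Y \<inter> D \<inter> C = {}" using dis[OF \<open>C \<in> P\<close>] by blast
      then show ?thesis using False assms(3) by simp
    qed
  qed
  finally have 1: "r (Y \<inter> D) = (\<Sum>C\<in>P. if C = D then r (Y \<inter> C) else 0)" .
  have "r (Y - D) = (\<Sum>C\<in>P. r ((Y - D) \<inter> C))" using decomp_rank[OF assms(1)] assms(5) by blast
  also have "\<dots> = (\<Sum>C\<in>P. if C = D then 0 else r (Y \<inter> C))"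
  proof (rule sum.cong[OF refl])
    fix C assume "C \<in> P"
    then show "r ((Y - D) \<inter> C) = (if C = D then 0 else r (Y \<inter> C))"
    proof (cases "C = D")
      case True then have "(Y - D) \<inter> C = {}" by blast
      then show ?thesis using assms(3) True by simp
    next
      case False
      then have "(Y - D) \<inter> C = Y \<inter> C" using dis[OF \<open>C \<in> P\<close>] by blast
      then show ?thesis using False by simp
    qed
  qed
  finally have 2: "r (Y - D) = (\<Sum>C\<in>P. if C = D then 0 else r (Y \<inter> C))" .
  have "r Y = (\<Sum>C\<in>P. r (Y \<inter> C))" using decomp_rank[OF assms(1)] assms(5) by blast
  also have "\<dots> = (\<Sum>C\<in>P. (if C = D then r (Y \<inter> C) else 0) + (if C = D then 0 else r (Y \<inter> C)))"
    by (intro sum.cong) auto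
  also have "\<dots> = r (Y \<inter> D) + r (Y - D)" unfolding 1 2 sum.distrib ..
  finally show ?thesis .
qed

lemma two_comps_disconn:
  assumes "direct_sum_decomp T r P" "finite T" "r {} = 0" "U \<subseteq> T" "C0 \<in> P"
    "U \<inter> C0 \<noteq> {}" "\<not> U \<subseteq> C0"
  shows "\<not> connected_matroid U r"
  unfolding connected_matroid_def
proof (rule notI, elim notE, intro exI conjI allI impI)
  show "U \<inter> C0 \<noteq> {}" by fact
  show "U - C0 \<noteq> {}" using assms by blast
  show "(U \<inter> C0) \<inter> (U - C0) = {}" by blast
  show "(U \<inter> C0) \<union> (U - C0) = U" by blast
  fix Y assume Y: "Y \<subseteq> U"
  have "r Y = r (Y \<inter> C0) + r (Y - C0)" using decomp_split[OF assms(1-3,5)] Y assms(4) by blast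
  moreover have "Y \<inter> (U \<inter> C0) = Y \<inter> C0" "Y \<inter> (U - C0) = Y - C0" using Y by auto
  ultimately show "r Y = r (Y \<inter> (U \<inter> C0)) + r (Y \<inter> (U - C0))" by simp
qed

lemma comp_conn: "component S rk C \<Longrightarrow> connected_matroid C rk \<and> C \<subseteq> S"
  unfolding component_def using decomp_sub by blast

lemma separator:
  assumes m: "matroid E rk" and B: "B \<subseteq> E" and le: "rk B + rk (E - B) \<le> rk E" and Y: "Y \<subseteq> E"
  shows "rk Y = rk (Y \<inter> B) + rk (Y \<inter> (E - B))"
proof -
  have e0: "rk {} = 0" using matroid_empty[OF m] .
  have "rk ((Y \<inter> B) \<union> (Y \<inter> (E - B))) + rk ((Y \<inter> B) \<inter> (Y \<inter> (E - B))) \<le> rk (Y \<inter> B) + rk (Y \<inter> (E - B))"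
    using matroid_submod[OF m, of "Y \<inter> B" "Y \<inter> (E - B)"] Y by blast
  moreover have "(Y \<inter> B) \<union> (Y \<inter> (E - B)) = Y" "(Y \<inter> B) \<inter> (Y \<inter> (E - B)) = {}" using Y by auto
  ultimately have 1: "rk Y \<le> rk (Y \<inter> B) + rk (Y \<inter> (E - B))" using e0 by simp
  have "rk (Y \<union> (E - B)) + rk (Y \<inter> (E - B)) \<le> rk Y + rk (E - B)"
    using matroid_submod[OF m, of Y "E - B"] Y by blast
  moreover have "rk ((Y \<union> (E - B)) \<union> B) + rk ((Y \<union> (E - B)) \<inter> B) \<le> rk (Y \<union> (E - B)) + rk B"
    using matroid_submod[OF m, of "Y \<union> (E - B)" B] Y B by blast
  moreover have "(Y \<union> (E - B)) \<union> B = E" "(Y \<union> (E - B)) \<inter> B = Y \<inter> B" using Y B by auto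
  ultimately have "rk E + rk (Y \<inter> B) + rk (Y \<inter> (E - B)) \<le> rk Y + rk (E - B) + rk B" by simp
  then show ?thesis using 1 le by linarith
qed

lemma contr_add: "matroid E rk \<Longrightarrow> A \<union> S \<subseteq> E \<Longrightarrow> contr_rk rk S A + rk S = rk (A \<union> S)"
  unfolding contr_rk_def using matroid_mono[of E rk S "A \<union> S"] by auto

lemma keyK:
  assumes m: "matroid E rk" and S: "S \<subseteq> E"
    and P: "direct_sum_decomp (E - S) (contr_rk rk S) P" and D0: "D0 \<in> P" and Z: "Z \<subseteq> E - S"
  shows "rk (Z \<union> S) + rk S = rk ((Z \<inter> D0) \<union> S) + rk ((Z - D0) \<union> S)"
proof -
  have fE: "finite (E - S)" using matroid_finite[OF m] by simp
  have c0: "contr_rk rk S {} = 0" unfolding contr_rk_def by simp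
  have "contr_rk rk S Z = contr_rk rk S (Z \<inter> D0) + contr_rk rk S (Z - D0)"
    using decomp_split[OF P fE c0 D0 Z] .
  moreover have "contr_rk rk S Z + rk S = rk (Z \<union> S)" by (rule contr_add[OF m]) (use Z S in auto)
  moreover have "contr_rk rk S (Z \<inter> D0) + rk S = rk ((Z \<inter> D0) \<union> S)" by (rule contr_add[OF m]) (use Z S in auto)
  moreover have "contr_rk rk S (Z - D0) + rk S = rk ((Z - D0) \<union> S)" by (rule contr_add[OF m]) (use Z S in auto)
  ultimately show ?thesis by linarith
qed



definition compcl :: "('a set \<Rightarrow> nat) \<Rightarrow> 'a set set \<Rightarrow> bool" where
  "compcl rk F \<longleftrightarrow> (\<forall>S\<in>F. \<forall>C. component S rk C \<longrightarrow> C \<in> F)"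

lemma sum_single_term:
  fixes g :: "'b \<Rightarrow> int"
  assumes "finite A" "x \<in> A" "\<And>y. y \<in> A \<Longrightarrow> y \<noteq> x \<Longrightarrow> g y = 0"
  shows "(\<Sum>y\<in>A. g y) = g x"
proof -
  have "(\<Sum>y\<in>A. g y) = g x + (\<Sum>y\<in>A - {x}. g y)" using assms by (simp add: sum.remove)
  also have "(\<Sum>y\<in>A - {x}. g y) = 0" using assms by (intro sum.neutral) auto
  finally show ?thesis by simp
qed

lemma claimA:
  assumes m: "matroid E rk" and F: "F \<subseteq> Pow E" and cl: "compcl rk F"
  shows "T \<in> F \<Longrightarrow> \<not> connected_matroid T rk \<Longrightarrow> a_coef F rk T = 0"
proof -
  assume TF: "T \<in> F"
  have fE: "finite E" using matroid_finite[OF m] .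
  have e0: "rk {} = 0" using matroid_empty[OF m] .
  have "finite T" using TF F fE by (meson PowD finite_subset subsetD)
  then show "T \<in> F \<Longrightarrow> \<not> connected_matroid T rk \<Longrightarrow> a_coef F rk T = 0"
  proof (induction T rule: finite_psubset_induct)
    case (psubset T)
    let ?a = "a_coef F rk"
    have TE: "T \<subseteq> E" using psubset.prems F by auto
    have Tne: "T \<noteq> {}" using psubset.prems conn_empty by blast
    obtain P where P: "direct_sum_decomp T rk P" and Pc: "\<forall>B\<in>P. connected_matroid B rk"
      using decomp_exists[OF psubset.hyps Tne] by blast
    have fP: "finite P" using decomp_finite[OF P psubset.hyps] .
    have Psub: "\<And>C. C \<in> P \<Longrightarrow> C \<subseteq> T \<and> C \<noteq> {}" using decomp_sub[OF P] by blast
    have PF: "\<And>C. C \<in> P \<Longrightarrow> C \<in> F"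
    proof -
      fix C assume "C \<in> P"
      then have "component T rk C" unfolding component_def using P Pc by blast
      then show "C \<in> F" using cl psubset.prems unfolding compcl_def by blast
    qed
    let ?FT = "{U\<in>F. U \<subseteq> T}"
    have fFT: "finite ?FT" by (rule finite_subset[of _ "Pow T"]) (auto simp: psubset.hyps)
    have 1: "(\<Sum>U\<in>?FT. ?a U) = int (card T) - int (rk T)"
      using a_sum_in[of T rk F, OF psubset.hyps e0 psubset.prems(1)] .
    have cardT: "card T = (\<Sum>C\<in>P. card C)"
    proof -
      have "pairwise disjnt P" unfolding pairwise_def disjnt_def using decomp_disj[OF P] by blast
      moreover have "\<And>C. C \<in> P \<Longrightarrow> finite C" using Psub psubset.hyps finite_subset by blast
      ultimately have "card (\<Union>P) = (\<Sum>C\<in>P. card C)" by (rule card_Union_disjoint)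
      then show ?thesis using decomp_union[OF P] by simp
    qed
    have rkT: "rk T = (\<Sum>C\<in>P. rk C)"
    proof -
      have "rk T = (\<Sum>C\<in>P. rk (T \<inter> C))" using decomp_rank[OF P] by blast
      also have "\<dots> = (\<Sum>C\<in>P. rk C)" using Psub by (intro sum.cong) (auto simp: Int_absorb1)
      finally show ?thesis .
    qed
    have 2: "int (card T) - int (rk T) = (\<Sum>C\<in>P. int (card C) - int (rk C))"
      unfolding cardT rkT by (simp add: sum_subtractf)
    have 3: "(\<Sum>C\<in>P. int (card C) - int (rk C)) = (\<Sum>C\<in>P. \<Sum>U\<in>{U\<in>?FT. U \<subseteq> C}. ?a U)"
    proof (rule sum.cong[OF refl])
      fix C assume C: "C \<in> P"
      have fC: "finite C" using Psub[OF C] psubset.hyps finite_subset by blast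
      have "{U\<in>?FT. U \<subseteq> C} = {U\<in>F. U \<subseteq> C}" using Psub[OF C] by auto
      then show "int (card C) - int (rk C) = (\<Sum>U\<in>{U\<in>?FT. U \<subseteq> C}. ?a U)"
        using a_sum_in[of C rk F, OF fC e0 PF[OF C]] by simp
    qed
    have 4: "(\<Sum>C\<in>P. \<Sum>U\<in>{U\<in>?FT. U \<subseteq> C}. ?a U) = (\<Sum>U\<in>?FT. \<Sum>C\<in>{C\<in>P. U \<subseteq> C}. ?a U)"
      using sum.swap_restrict[OF fP fFT, of "\<lambda>C U. ?a U" "\<lambda>C U. U \<subseteq> C"] by simp
    have 5: "(\<Sum>U\<in>?FT. \<Sum>C\<in>{C\<in>P. U \<subseteq> C}. ?a U) = (\<Sum>U\<in>?FT. of_nat (card {C\<in>P. U \<subseteq> C}) * ?a U)"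
      by simp
    have 6: "(\<Sum>U\<in>?FT. (1 - of_nat (card {C\<in>P. U \<subseteq> C})) * ?a U) = 0"
      using 1 2 3 4 5 by (simp add: algebra_simps sum_subtractf)
    have nT: "{C\<in>P. T \<subseteq> C} = {}"
    proof (rule ccontr)
      assume "{C\<in>P. T \<subseteq> C} \<noteq> {}"
      then obtain C where "C \<in> P" "T \<subseteq> C" by blast
      then have "C = T" using Psub by blast
      then show False using Pc \<open>C \<in> P\<close> psubset.prems(2) by blast
    qed
    have 7: "(\<Sum>U\<in>?FT. (1 - of_nat (card {C\<in>P. U \<subseteq> C})) * ?a U) = (1 - of_nat (card {C\<in>P. T \<subseteq> C})) * ?a T"
    proof (rule sum_single_term[OF fFT])
      show "T \<in> ?FT" using psubset.prems by auto
      fix U assume U: "U \<in> ?FT" "U \<noteq> T"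
      then have UT: "U \<subset> T" by auto
      show "(1 - of_nat (card {C\<in>P. U \<subseteq> C})) * ?a U = 0"
      proof (cases "U = {}")
        case True then show ?thesis by (simp add: a_empty)
      next
        case Une: False
        show ?thesis
        proof (cases "{C\<in>P. U \<subseteq> C} = {}")
          case True
          obtain x where x: "x \<in> U" using Une by blast
          then have "x \<in> \<Union>P" using UT decomp_union[OF P] by blast
          then obtain C0 where C0: "C0 \<in> P" "x \<in> C0" by blast
          have "\<not> U \<subseteq> C0" using True C0 by blast
          then have "\<not> connected_matroid U rk"
            using two_comps_disconn[OF P psubset.hyps e0 _ C0(1)] UT x C0 by blast
          then have "?a U = 0" using psubset.IH[OF UT] U by blast
          then show ?thesis by simp
        next
          case False
          then obtain C1 where C1: "C1 \<in> P" "U \<subseteq> C1" by blast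
          have "{C\<in>P. U \<subseteq> C} = {C1}"
          proof
            show "{C1} \<subseteq> {C\<in>P. U \<subseteq> C}" using C1 by auto
            show "{C\<in>P. U \<subseteq> C} \<subseteq> {C1}"
            proof
              fix C assume "C \<in> {C\<in>P. U \<subseteq> C}"
              then have "C \<in> P" "U \<subseteq> C" by auto
              then have "C \<inter> C1 \<noteq> {}" using C1 Une by blast
              then show "C \<in> {C1}" using decomp_disj[OF P \<open>C \<in> P\<close> C1(1)] by blast
            qed
          qed
          then show ?thesis by simp
        qed
      qed
    qed
    show ?case using 6 7 nT by simp
  qed
qed

lemma removal:
  assumes m: "matroid E rk" and F: "F \<subseteq> Pow E" and cl: "compcl rk F"
  shows "ec_on E rk F = ec_on E rk {S\<in>F. connected_matroid S rk}"
proof -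
  have fE: "finite E" using matroid_finite[OF m] .
  have e0: "rk {} = 0" using matroid_empty[OF m] .
  let ?D = "{S\<in>F. \<not> connected_matroid S rk}"
  have fF: "finite F" using F fE by (meson finite_Pow_iff finite_subset)
  have fD: "finite ?D" using fF by simp
  have "ec_on E rk (F - D') = ec_on E rk F" if "D' \<subseteq> ?D" for D'
  proof -
    have "finite D'" using fD that finite_subset by blast
    then show ?thesis using that
    proof (induction D' rule: finite_subset_induct')
      case empty then show ?case by simp
    next
      case (insert x D')
      let ?F1 = "F - insert x D'"
      have xF: "x \<in> F - D'" using insert by auto
      have eq: "F - D' = insert x ?F1" using insert by auto
      have xnot: "x \<notin> ?F1" by auto
      have F1: "?F1 \<subseteq> Pow E" using F by auto
      have xE: "x \<subseteq> E" using xF F by auto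
      have ch: "ec_on E rk (insert x ?F1) = ec_on E rk ?F1 + a_coef ?F1 rk x * up E rk ?F1 x"
        using change[of E _ _ rk, OF fE F1 xE xnot e0] .
      have "a_coef ?F1 rk x = a_coef (F - D') rk x"
        by (rule a_local) auto
      also have "\<dots> = 0"
      proof (rule claimA[OF m _ _ xF])
        show "F - D' \<subseteq> Pow E" using F by auto
        show "compcl rk (F - D')" unfolding compcl_def
        proof (intro ballI allI impI)
          fix S C assume "S \<in> F - D'" "component S rk C"
          then have "C \<in> F" "connected_matroid C rk" using cl comp_conn unfolding compcl_def by blast+
          then show "C \<in> F - D'" using insert.hyps(3) by blast
        qed
        show "\<not> connected_matroid x rk" using insert.hyps(2) by blast
      qed
      finally have "ec_on E rk (F - D') = ec_on E rk ?F1" using ch eq by simp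
      then show ?case using insert.IH by simp
    qed
  qed
  moreover have "F - ?D = {S\<in>F. connected_matroid S rk}" by auto
  ultimately show ?thesis by (metis subset_refl)
qed



lemma disconnE:
  assumes "\<not> connected_matroid T r"
  obtains A B where "A \<noteq> {}" "B \<noteq> {}" "A \<inter> B = {}" "A \<union> B = T"
    "\<And>X. X \<subseteq> T \<Longrightarrow> r X = r (X \<inter> A) + r (X \<inter> B)"
proof -
  have "\<exists>A B. A \<noteq> {} \<and> B \<noteq> {} \<and> A \<inter> B = {} \<and> A \<union> B = T \<and> (\<forall>X. X \<subseteq> T \<longrightarrow> r X = r (X \<inter> A) + r (X \<inter> B))"
    using assms unfolding connected_matroid_def by (rule notnotD)
  then obtain A B where h: "A \<noteq> {} \<and> B \<noteq> {} \<and> A \<inter> B = {} \<and> A \<union> B = T \<and> (\<forall>X. X \<subseteq> T \<longrightarrow> r X = r (X \<inter> A) + r (X \<inter> B))"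
    by iprover
  have h1: "A \<noteq> {}" using h by (rule conjunct1)
  have h2: "B \<noteq> {}" using h[THEN conjunct2] by (rule conjunct1)
  have h3: "A \<inter> B = {}" using h[THEN conjunct2, THEN conjunct2] by (rule conjunct1)
  have h4: "A \<union> B = T" using h[THEN conjunct2, THEN conjunct2, THEN conjunct2] by (rule conjunct1)
  have h5: "\<forall>X. X \<subseteq> T \<longrightarrow> r X = r (X \<inter> A) + r (X \<inter> B)"
    using h[THEN conjunct2, THEN conjunct2, THEN conjunct2] by (rule conjunct2)
  show ?thesis by (rule that[OF h1 h2 h3 h4]) (use h5 in iprover)
qed

lemma TD_aux:
  assumes m: "matroid E rk" and cE: "connected_matroid E rk" and SE: "S \<subseteq> E"
    and P: "direct_sum_decomp (E - S) (contr_rk rk S) P" and D: "D \<in> P"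
    and AB: "A \<noteq> {}" "B \<noteq> {}" "A \<inter> B = {}" "A \<union> B = E - D"
    and add: "\<And>X. X \<subseteq> E - D \<Longrightarrow> rk X = rk (X \<inter> A) + rk (X \<inter> B)"
    and SA: "S \<subseteq> A"
  shows False
proof -
  have DS: "D \<subseteq> E - S" using decomp_sub[OF P D] by blast
  have k: "rk ((E - S) \<union> S) + rk S = rk (((E - S) \<inter> D) \<union> S) + rk (((E - S) - D) \<union> S)"
    using keyK[OF m SE P D, of "E - S"] by simp
  have e1: "(E - S) \<union> S = E" using SE by auto
  have e2: "((E - S) \<inter> D) \<union> S = D \<union> S" using DS by auto
  have e3: "((E - S) - D) \<union> S = E - D" using DS SE by auto
  have k': "rk E + rk S = rk (D \<union> S) + rk (E - D)" using k unfolding e1 e2 e3 .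
  have sub: "rk (A \<union> (D \<union> S)) + rk (A \<inter> (D \<union> S)) \<le> rk A + rk (D \<union> S)"
    using matroid_submod[OF m, of A "D \<union> S"] AB SE DS by blast
  have e4: "A \<union> (D \<union> S) = A \<union> D" using SA by auto
  have e5: "A \<inter> (D \<union> S) = S" using SA AB by auto
  have ab: "rk (E - D) = rk A + rk B"
  proof -
    have "rk (E - D) = rk ((E - D) \<inter> A) + rk ((E - D) \<inter> B)" using add by blast
    moreover have "(E - D) \<inter> A = A" "(E - D) \<inter> B = B" using AB by auto
    ultimately show ?thesis by simp
  qed
  have le: "rk B + rk (E - B) \<le> rk E"
  proof -
    have "E - B = A \<union> D" using AB DS by auto
    then have "rk (E - B) = rk (A \<union> D)" by simp
    then show ?thesis using sub k' ab unfolding e4 e5 by linarith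
  qed
  have BE: "B \<subseteq> E" using AB by auto
  have sep: "\<And>Y. Y \<subseteq> E \<Longrightarrow> rk Y = rk (Y \<inter> B) + rk (Y \<inter> (E - B))"
    using separator[OF m BE le] by blast
  have EB: "E - B \<noteq> {}" using AB by auto
  have "\<exists>A' B'. A' \<noteq> {} \<and> B' \<noteq> {} \<and> A' \<inter> B' = {} \<and> A' \<union> B' = E
             \<and> (\<forall>X. X \<subseteq> E \<longrightarrow> rk X = rk (X \<inter> A') + rk (X \<inter> B'))"
  proof (rule exI[of _ B], rule exI[of _ "E - B"], intro conjI allI impI)
    show "B \<noteq> {}" by (fact AB(2))
    show "E - B \<noteq> {}" by (fact EB)
    show "B \<inter> (E - B) = {}" by blast
    show "B \<union> (E - B) = E" using BE by blast
    fix X assume "X \<subseteq> E" then show "rk X = rk (X \<inter> B) + rk (X \<inter> (E - B))" by (rule sep)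
  qed
  then show False using cE unfolding connected_matroid_def by blast
qed

lemma TD_conn:
  assumes m: "matroid E rk" and cE: "connected_matroid E rk" and SE: "S \<subseteq> E"
    and cS: "connected_matroid S rk"
    and P: "direct_sum_decomp (E - S) (contr_rk rk S) P" and D: "D \<in> P"
  shows "connected_matroid (E - D) rk"
proof (rule ccontr)
  assume "\<not> connected_matroid (E - D) rk"
  then obtain A B where AB: "A \<noteq> {}" "B \<noteq> {}" "A \<inter> B = {}" "A \<union> B = E - D"
    and add: "\<And>X. X \<subseteq> E - D \<Longrightarrow> rk X = rk (X \<inter> A) + rk (X \<inter> B)"
    by (rule disconnE) iprover
  have DS: "D \<subseteq> E - S" using decomp_sub[OF P D] by blast
  have SED: "S \<subseteq> E - D" using DS SE by auto
  have "S \<inter> A = {} \<or> S \<inter> B = {}"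
  proof (rule ccontr)
    assume "\<not> (S \<inter> A = {} \<or> S \<inter> B = {})"
    then have ne: "S \<inter> A \<noteq> {}" "S \<inter> B \<noteq> {}" by auto
    have "\<not> connected_matroid S rk"
      unfolding connected_matroid_def
    proof (rule notI, elim notE, intro exI conjI allI impI)
      show "S \<inter> A \<noteq> {}" "S \<inter> B \<noteq> {}" by (fact ne)+
      show "S \<inter> A \<inter> (S \<inter> B) = {}" using AB by auto
      show "S \<inter> A \<union> S \<inter> B = S" using AB SED by auto
      fix Y assume "Y \<subseteq> S"
      then have "rk Y = rk (Y \<inter> A) + rk (Y \<inter> B)" using add SED by blast
      moreover have "Y \<inter> (S \<inter> A) = Y \<inter> A" "Y \<inter> (S \<inter> B) = Y \<inter> B" using \<open>Y \<subseteq> S\<close> by auto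
      ultimately show "rk Y = rk (Y \<inter> (S \<inter> A)) + rk (Y \<inter> (S \<inter> B))" by simp
    qed
    then show False using cS by blast
  qed
  then show False
  proof
    assume "S \<inter> A = {}"
    then have "S \<subseteq> B" using SED AB by auto
    moreover have "\<And>X. X \<subseteq> E - D \<Longrightarrow> rk X = rk (X \<inter> B) + rk (X \<inter> A)" using add by (simp add: add.commute)
    ultimately show False using TD_aux[OF m cE SE P D, of B A] AB by blast
  next
    assume "S \<inter> B = {}"
    then have "S \<subseteq> A" using SED AB by auto
    then show False using TD_aux[OF m cE SE P D, of A B] AB add by blast
  qed
qed

lemma contr_disconn:
  assumes m: "matroid E rk" and SE: "S \<subseteq> E"
    and P: "direct_sum_decomp (E - S) (contr_rk rk S) P"
    and SU: "S \<subseteq> U" and UE: "U \<subseteq> E" "U \<noteq> E" and nD: "\<forall>D\<in>P. \<not> (E - D \<subseteq> U)"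
  shows "\<not> connected_matroid (E - U) (contr_rk rk U)"
proof -
  obtain x where x: "x \<in> E" "x \<notin> U" using UE by blast
  then have "x \<in> \<Union>P" using decomp_union[OF P] SU by blast
  then obtain D0 where D0: "D0 \<in> P" "x \<in> D0" by blast
  obtain y where y: "y \<in> E" "y \<notin> D0" "y \<notin> U" using nD D0 by blast
  let ?V = "U - S"
  have key: "contr_rk rk U Y = contr_rk rk U (Y \<inter> ((E - U) \<inter> D0)) + contr_rk rk U (Y \<inter> ((E - U) - D0))"
    if Y: "Y \<subseteq> E - U" for Y
  proof -
    have Z1: "Y \<union> ?V \<subseteq> E - S" "?V \<subseteq> E - S" "(Y \<inter> D0) \<union> ?V \<subseteq> E - S" "(Y - D0) \<union> ?V \<subseteq> E - S"
      using Y UE SU by auto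
    have K1: "rk ((Y \<union> ?V) \<union> S) + rk S = rk (((Y \<union> ?V) \<inter> D0) \<union> S) + rk (((Y \<union> ?V) - D0) \<union> S)"
      using keyK[OF m SE P D0(1) Z1(1)] .
    have K0: "rk (?V \<union> S) + rk S = rk ((?V \<inter> D0) \<union> S) + rk ((?V - D0) \<union> S)"
      using keyK[OF m SE P D0(1) Z1(2)] .
    have K2: "rk (((Y \<inter> D0) \<union> ?V) \<union> S) + rk S = rk ((((Y \<inter> D0) \<union> ?V) \<inter> D0) \<union> S) + rk ((((Y \<inter> D0) \<union> ?V) - D0) \<union> S)"
      using keyK[OF m SE P D0(1) Z1(3)] .
    have K3: "rk (((Y - D0) \<union> ?V) \<union> S) + rk S = rk ((((Y - D0) \<union> ?V) \<inter> D0) \<union> S) + rk ((((Y - D0) \<union> ?V) - D0) \<union> S)"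
      using keyK[OF m SE P D0(1) Z1(4)] .
    have q1: "rk ((Y \<union> ?V) \<union> S) = rk (Y \<union> U)" by (rule arg_cong[where f=rk]) (use SU in auto)
    have q0: "rk (?V \<union> S) = rk U" by (rule arg_cong[where f=rk]) (use SU in auto)
    have q2: "rk (((Y \<inter> D0) \<union> ?V) \<union> S) = rk ((Y \<inter> D0) \<union> U)" by (rule arg_cong[where f=rk]) (use SU in auto)
    have q3: "rk (((Y - D0) \<union> ?V) \<union> S) = rk ((Y - D0) \<union> U)" by (rule arg_cong[where f=rk]) (use SU in auto)
    have q4: "rk ((((Y \<inter> D0) \<union> ?V) \<inter> D0) \<union> S) = rk (((Y \<union> ?V) \<inter> D0) \<union> S)" by (rule arg_cong[where f=rk]) auto
    have q5: "rk ((((Y \<inter> D0) \<union> ?V) - D0) \<union> S) = rk ((?V - D0) \<union> S)" by (rule arg_cong[where f=rk]) auto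
    have q6: "rk ((((Y - D0) \<union> ?V) \<inter> D0) \<union> S) = rk ((?V \<inter> D0) \<union> S)" by (rule arg_cong[where f=rk]) auto
    have q7: "rk ((((Y - D0) \<union> ?V) - D0) \<union> S) = rk (((Y \<union> ?V) - D0) \<union> S)" by (rule arg_cong[where f=rk]) auto
    have c1: "contr_rk rk U Y + rk U = rk (Y \<union> U)" by (rule contr_add[OF m]) (use Y UE in auto)
    have c2: "contr_rk rk U (Y \<inter> D0) + rk U = rk ((Y \<inter> D0) \<union> U)" by (rule contr_add[OF m]) (use Y UE in auto)
    have c3: "contr_rk rk U (Y - D0) + rk U = rk ((Y - D0) \<union> U)" by (rule contr_add[OF m]) (use Y UE in auto)
    have i1: "Y \<inter> ((E - U) \<inter> D0) = Y \<inter> D0" "Y \<inter> ((E - U) - D0) = Y - D0" using Y by auto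
    show ?thesis unfolding i1 using K1 K0 K2 K3 q0 q1 q2 q3 q4 q5 q6 q7 c1 c2 c3 by linarith
  qed
  show ?thesis
    unfolding connected_matroid_def
  proof (rule notI, elim notE, intro exI conjI allI impI)
    show "(E - U) \<inter> D0 \<noteq> {}" using x D0 by blast
    show "(E - U) - D0 \<noteq> {}" using y by blast
    show "(E - U) \<inter> D0 \<inter> ((E - U) - D0) = {}" by blast
    show "(E - U) \<inter> D0 \<union> ((E - U) - D0) = E - U" by blast
    fix Y assume "Y \<subseteq> E - U"
    then show "contr_rk rk U Y = contr_rk rk U (Y \<inter> ((E - U) \<inter> D0)) + contr_rk rk U (Y \<inter> ((E - U) - D0))"
      by (rule key)
  qed
qed



lemma contr_empty: "matroid E rk \<Longrightarrow> contr_rk rk {} = rk"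
  using matroid_empty[of E rk] unfolding contr_rk_def by (intro ext) simp

lemma claimA':
  assumes m: "matroid E rk" and cE: "connected_matroid E rk"
    and H: "H = {S\<in>Pow E. connected_matroid S rk \<and> X \<subseteq> S}"
  shows "S \<in> H \<Longrightarrow> \<not> connected_matroid (E - S) (contr_rk rk S) \<Longrightarrow> up E rk H S = 0"
proof (induction "card (E - S)" arbitrary: S rule: less_induct)
  case less
  have fE: "finite E" using matroid_finite[OF m] .
  have SE: "S \<subseteq> E" and cS: "connected_matroid S rk" and XS: "X \<subseteq> S" using less.prems H by auto
  have HE: "H \<subseteq> Pow E" using H by auto
  have fH: "finite H" using HE fE by (meson finite_Pow_iff finite_subset)
  have Sne: "S \<noteq> {}"
  proof
    assume "S = {}"
    then show False using less.prems(2) cE contr_empty[OF m] by simp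
  qed
  have ESne: "E - S \<noteq> {}"
  proof
    assume h: "E - S = {}"
    have "connected_matroid (E - S) (contr_rk rk S)" unfolding h by (rule conn_empty)
    then show False using less.prems(2) by blast
  qed
  obtain P where P: "direct_sum_decomp (E - S) (contr_rk rk S) P"
    and Pc: "\<forall>B\<in>P. connected_matroid B (contr_rk rk S)"
    using decomp_exists[of "E - S" "contr_rk rk S"] fE ESne by blast
  have fP: "finite P" using decomp_finite[OF P] fE by simp
  have Psub: "\<And>D. D \<in> P \<Longrightarrow> D \<subseteq> E - S \<and> D \<noteq> {}" using decomp_sub[OF P] by blast
  have TDH: "\<And>D. D \<in> P \<Longrightarrow> E - D \<in> H"
  proof -
    fix D assume D: "D \<in> P"
    have "connected_matroid (E - D) rk" using TD_conn[OF m cE SE cS P D] .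
    have DS: "D \<subseteq> E - S" using Psub[OF D] by (rule conjunct1)
    have "X \<subseteq> E - D"
    proof
      fix y assume "y \<in> X"
      then have "y \<in> S" "y \<in> E" using XS SE by auto
      then show "y \<in> E - D" using DS by auto
    qed
    moreover note \<open>connected_matroid (E - D) rk\<close>
    ultimately show "E - D \<in> H" unfolding H by blast
  qed
  let ?f = "up E rk H"
  let ?HS = "{U\<in>H. S \<subseteq> U}"
  have fHS: "finite ?HS" using fH by simp
  let ?w = "\<lambda>S. int (rk E) - int (rk S)"
  have 1: "(\<Sum>U\<in>?HS. ?f U) = ?w S" using up_sum_in[OF fE HE less.prems(1)] .
  have 2: "(\<Sum>U\<in>{U\<in>?HS. E - D \<subseteq> U}. ?f U) = ?w (E - D)" if D: "D \<in> P" for D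
  proof -
    have "{U\<in>?HS. E - D \<subseteq> U} = {U\<in>H. E - D \<subseteq> U}" using Psub[OF D] SE by auto
    then show ?thesis using up_sum_in[OF fE HE TDH[OF D]] by simp
  qed
  have 3: "?w S = (\<Sum>D\<in>P. ?w (E - D))"
  proof -
    have c0: "contr_rk rk S (E - S) = (\<Sum>D\<in>P. contr_rk rk S ((E - S) \<inter> D))"
      using decomp_rank[OF P] by blast
    also have "\<dots> = (\<Sum>D\<in>P. contr_rk rk S D)"
      using Psub by (intro sum.cong) (auto simp: Int_absorb1)
    finally have c1: "int (contr_rk rk S (E - S)) = (\<Sum>D\<in>P. int (contr_rk rk S D))" by simp
    have c2: "contr_rk rk S (E - S) + rk S = rk E"
      using contr_add[OF m, of "E - S" S] SE by (simp add: Un_absorb2)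
    have c3: "int (contr_rk rk S D) = ?w (E - D)" if D: "D \<in> P" for D
    proof -
      have DS: "D \<subseteq> E - S" using Psub[OF D] by blast
      have k: "rk ((E - S) \<union> S) + rk S = rk (((E - S) \<inter> D) \<union> S) + rk (((E - S) - D) \<union> S)"
        using keyK[OF m SE P D, of "E - S"] by simp
      have e1: "(E - S) \<union> S = E" using SE by auto
      have e2: "((E - S) \<inter> D) \<union> S = D \<union> S" using DS by auto
      have e3: "((E - S) - D) \<union> S = E - D" using DS SE by auto
      have k': "rk E + rk S = rk (D \<union> S) + rk (E - D)" using k unfolding e1 e2 e3 .
      have "contr_rk rk S D + rk S = rk (D \<union> S)" by (rule contr_add[OF m]) (use DS SE in auto)
      then show ?thesis using k' by linarith
    qed
    show ?thesis using c1 c2 c3 by simp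
  qed
  have 4: "(\<Sum>D\<in>P. \<Sum>U\<in>{U\<in>?HS. E - D \<subseteq> U}. ?f U) = (\<Sum>U\<in>?HS. \<Sum>D\<in>{D\<in>P. E - D \<subseteq> U}. ?f U)"
    using sum.swap_restrict[OF fP fHS, of "\<lambda>D U. ?f U" "\<lambda>D U. E - D \<subseteq> U"] by simp
  have 5: "(\<Sum>U\<in>?HS. (1 - of_nat (card {D\<in>P. E - D \<subseteq> U})) * ?f U) = 0"
  proof -
    have "(\<Sum>U\<in>?HS. ?f U) = (\<Sum>D\<in>P. \<Sum>U\<in>{U\<in>?HS. E - D \<subseteq> U}. ?f U)"
      using 1 2 3 by simp
    also have "\<dots> = (\<Sum>U\<in>?HS. of_nat (card {D\<in>P. E - D \<subseteq> U}) * ?f U)" using 4 by simp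
    finally show ?thesis by (simp add: algebra_simps sum_subtractf)
  qed
  have nS: "{D\<in>P. E - D \<subseteq> S} = {}"
  proof (rule ccontr)
    assume "{D\<in>P. E - D \<subseteq> S} \<noteq> {}"
    then obtain D where D: "D \<in> P" "E - D \<subseteq> S" by blast
    then have "D = E - S" using Psub[OF D(1)] by blast
    then show False using Pc D(1) less.prems(2) by blast
  qed
  have 6: "(\<Sum>U\<in>?HS. (1 - of_nat (card {D\<in>P. E - D \<subseteq> U})) * ?f U) = (1 - of_nat (card {D\<in>P. E - D \<subseteq> S})) * ?f S"
  proof (rule sum_single_term[OF fHS])
    show "S \<in> ?HS" using less.prems by auto
    fix U assume U: "U \<in> ?HS" "U \<noteq> S"
    then have UH: "U \<in> H" and SU: "S \<subset> U" and UE: "U \<subseteq> E" using H by auto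
    show "(1 - of_nat (card {D\<in>P. E - D \<subseteq> U})) * ?f U = 0"
    proof (cases "U = E")
      case True
      have e: "{T\<in>H. E \<subset> T \<and> T \<subseteq> E} = {}" by auto
      have "?f E = 0" using up_eq[OF fE subset_refl, of rk H] unfolding e by simp
      then have "?f U = 0" using True by simp
      then show ?thesis by simp
    next
      case UnE: False
      show ?thesis
      proof (cases "{D\<in>P. E - D \<subseteq> U} = {}")
        case True
        have nc: "\<not> connected_matroid (E - U) (contr_rk rk U)"
          using contr_disconn[OF m SE P _ UE UnE] SU True by blast
        have "E - U \<subset> E - S" using SU UE by blast
        then have "card (E - U) < card (E - S)" using fE by (auto intro: psubset_card_mono)
        then have "?f U = 0" using less.hyps UH nc by blast
        then show ?thesis by simp
      next
        case False
        then obtain D1 where D1: "D1 \<in> P" "E - D1 \<subseteq> U" by blast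
        have "{D\<in>P. E - D \<subseteq> U} = {D1}"
        proof
          show "{D1} \<subseteq> {D\<in>P. E - D \<subseteq> U}" using D1 by auto
          show "{D\<in>P. E - D \<subseteq> U} \<subseteq> {D1}"
          proof
            fix D assume "D \<in> {D\<in>P. E - D \<subseteq> U}"
            then have D: "D \<in> P" "E - D \<subseteq> U" by auto
            show "D \<in> {D1}"
            proof (rule ccontr)
              assume "D \<notin> {D1}"
              then have "D \<inter> D1 = {}" using decomp_disj[OF P D(1) D1(1)] by blast
              then have "E \<subseteq> U" using D(2) D1(2) by blast
              then show False using UE UnE by blast
            qed
          qed
        qed
        then show ?thesis by simp
      qed
    qed
  qed
  show ?case using 5 6 nS by simp
qed

lemma step2:
  assumes m: "matroid E rk" and cE: "connected_matroid E rk" and SS: "SS \<subseteq> Pow E"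
    and hi: "\<And>S. S \<subseteq> E \<Longrightarrow> connected_matroid S rk \<Longrightarrow>
           connected_matroid (E - S) (contr_rk rk S) \<Longrightarrow> S \<in> SS"
  shows "ec_on E rk (SS \<inter> {S\<in>Pow E. connected_matroid S rk}) = ec_on E rk {S\<in>Pow E. connected_matroid S rk}"
proof -
  have fE: "finite E" using matroid_finite[OF m] .
  have e0: "rk {} = 0" using matroid_empty[OF m] .
  define Cn where "Cn = {S\<in>Pow E. connected_matroid S rk}"
  define L where "L n = (SS \<inter> Cn) \<union> {S\<in>Cn. n \<le> card S}" for n
  have fCn: "finite Cn" unfolding Cn_def using fE by simp
  have step: "ec_on E rk (L n) = ec_on E rk (L (Suc n))" for n
  proof -
    let ?Y = "{S\<in>Cn. card S = n} - SS"
    have LY: "L n = L (Suc n) \<union> ?Y" unfolding L_def by auto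
    have "ec_on E rk (L (Suc n) \<union> D') = ec_on E rk (L (Suc n))" if "D' \<subseteq> ?Y" for D'
    proof -
      have fY: "finite ?Y" by (rule finite_subset[OF _ fCn]) auto
      have "finite D'" using finite_subset[OF that fY] .
      then show ?thesis using that
      proof (induction D' rule: finite_subset_induct')
        case empty then show ?case by simp
      next
        case (insert x D')
        let ?F1 = "L (Suc n) \<union> D'"
        have x: "x \<in> Cn" "card x = n" "x \<notin> SS" using insert.hyps(2) by auto
        have xE: "x \<subseteq> E" and cx: "connected_matroid x rk" using x unfolding Cn_def by auto
        have xnot: "x \<notin> ?F1" using x insert.hyps(4) unfolding L_def by auto
        have F1: "?F1 \<subseteq> Pow E" using insert.hyps(3) unfolding L_def Cn_def by auto
        have eq: "L (Suc n) \<union> insert x D' = insert x ?F1" by auto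
        have ch: "ec_on E rk (insert x ?F1) = ec_on E rk ?F1 + a_coef ?F1 rk x * up E rk ?F1 x"
          using change[of E _ _ rk, OF fE F1 xE xnot e0] .
        define H where "H = {S\<in>Pow E. connected_matroid S rk \<and> x \<subseteq> S}"
        have "up E rk ?F1 x = up E rk H x"
        proof (rule up_local[OF fE])
          fix T assume T: "x \<subset> T" "T \<subseteq> E"
          show "T \<in> ?F1 \<longleftrightarrow> T \<in> H"
          proof
            assume "T \<in> ?F1"
            then have "T \<in> Cn" using insert.hyps(3) unfolding L_def by auto
            then show "T \<in> H" using T unfolding H_def Cn_def by auto
          next
            assume TH: "T \<in> H"
            have "finite T" using T fE finite_subset by blast
            then have "card x < card T" using T psubset_card_mono by blast
            then have "Suc n \<le> card T" using x by simp
            then show "T \<in> ?F1" using TH unfolding L_def Cn_def H_def by auto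
          qed
        qed
        also have "\<dots> = 0"
        proof (rule claimA'[OF m cE H_def])
          show "x \<in> H" using xE cx unfolding H_def by auto
          show "\<not> connected_matroid (E - x) (contr_rk rk x)" using hi[OF xE cx] x by blast
        qed
        finally have "ec_on E rk (insert x ?F1) = ec_on E rk ?F1" using ch by simp
        then show ?case using insert.IH eq by simp
      qed
    qed
    then show ?thesis using LY by (metis subset_refl)
  qed
  have "ec_on E rk (L 0) = ec_on E rk (L k)" for k
    by (induction k) (use step in auto)
  moreover have "L 0 = Cn" unfolding L_def by auto
  moreover have "L (Suc (card E)) = SS \<inter> Cn"
  proof -
    have "\<And>S. S \<in> Cn \<Longrightarrow> card S \<le> card E" unfolding Cn_def using fE card_mono by auto
    then show ?thesis unfolding L_def by fastforce
  qed
  ultimately show ?thesis unfolding Cn_def by metis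
qed

theorem theorem6p7:
  fixes E :: "'a set" and rk :: "'a set \<Rightarrow> nat" and SS :: "'a set set"
  assumes "matroid E rk"
    and "connected_matroid E rk"
    and "SS \<subseteq> Pow E"
    and "\<And>S. S \<subseteq> E \<Longrightarrow> connected_matroid S rk \<Longrightarrow>
           connected_matroid (E - S) (contr_rk rk S) \<Longrightarrow> S \<in> SS"
    and "\<And>S C. S \<in> SS \<Longrightarrow> component S rk C \<Longrightarrow> C \<in> SS"
  shows "ec_on E rk SS = ec E rk"
proof -
  have clSS: "compcl rk SS" unfolding compcl_def using assms(5) by blast
  have clP: "compcl rk (Pow E)" unfolding compcl_def using comp_conn by blast
  have "ec_on E rk SS = ec_on E rk {S\<in>SS. connected_matroid S rk}"
    using removal[OF assms(1,3) clSS] .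
  also have "{S\<in>SS. connected_matroid S rk} = SS \<inter> {S\<in>Pow E. connected_matroid S rk}"
    using assms(3) by auto
  also have "ec_on E rk \<dots> = ec_on E rk {S\<in>Pow E. connected_matroid S rk}"
    using step2[OF assms(1,2,3,4)] .
  also have "\<dots> = ec_on E rk (Pow E)"
    using removal[OF assms(1) subset_refl clP] by simp
  finally show ?thesis unfolding ec_def .
qed


end
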